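(* Let $\mathcal{L}$ be a $d$-colex, $1\le k<d$, $C\subset\mathbb{Z}_{d+1}$ a set of $k$ colors and $c^*\in\mathbb{Z}_{d+1}\setminus C$. Let $\widetilde\gamma$ be a $k$-cycle for $\mathcal{L}$ with $\mathrm{col}(\widetilde\gamma)\subseteq C\sqcup\{c^*\}$, and for every vertex $v\in\Delta_0^{c^*}(\widetilde\gamma)$ let $\widetilde\Omega(v)\subseteq\mathrm{Star}_{d-k}(v)$ be a set of $(d-k)$-simplices, each of color set $\mathbb{Z}_{d+1}\setminus C$, with $\sum_{\mu\in\widetilde\Omega(v)}\mathrm{Link}_{k-1}(\mu)=\partial_k(\widetilde\gamma|_v)$. Define the $d$-chain $\lambda=\sum_{v\in\Delta_0^{c^*}(\widetilde\gamma)}\sum_{\mu\in\widetilde\Omega(v)}\mathrm{Star}_d(\mu)$. Then $\lambda\in\ker\partial_{d,k-1}$. Moreover, if $\widetilde\gamma\notin\mathrm{im}\,\partial_{k+1}$, then $\lambda\notin\mathrm{im}\,\partial_{d-k-1,d}$.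
   Context: Conventions: all complexes are finite. For a simplicial complex $\mathcal{L}$, $\Delta_k(\mathcal{L})$ is its set of $k$-simplices, and for a simplex $\kappa$, $\Delta_l(\kappa)$ is the set of its $l$-dimensional faces. $C_k(\mathcal{L})$ is the $\mathbb{F}_2$-vector space with basis $\Delta_k(\mathcal{L})$; chains are identified with subsets, addition being symmetric difference. $\partial_k\kappa=\sum_{\nu\in\Delta_{k-1}(\kappa)}\nu$; $k$-cycles are elements of $\ker\partial_k$, $k$-boundaries of $\mathrm{im}\,\partial_{k+1}$. For a $j$-simplex $\kappa$ and $n\ge j$, $\mathrm{Star}_n(\kappa)=\{\nu\in\Delta_n(\mathcal{L}):\kappa\in\Delta_j(\nu)\}$ (regarded as a chain); for $n\le d-j-1$, $\mathrm{Link}_n(\kappa)=\{\nu\in\Delta_n(\mathcal{L}):\nu\cap\kappa=\emptyset\text{ and some }d\text{-simplex contains both}\}$, regarded as an $n$-chain. Generalized boundary maps: for $j\ne n$, $\partial_{j,n}:C_j(\mathcal{L})\to C_n(\mathcal{L})$ is linear with $\partial_{j,n}\kappa=\sum_{\nu\in\Delta_n(\kappa)}\nu$ if $j>n$ and $=\sum_{\nu\in\mathrm{Star}_n(\kappa)}\nu$ if $j<n$. (The color code of type $k$ on $\mathcal{L}$ has qubits on $d$-simplices; $Z$-type logical operators are elements of $\ker\partial_{d,k-1}$, and trivial ones are elements of $\mathrm{im}\,\partial_{d-k-1,d}$.) Colexes: a colorable $0$-ball is a point and a $0$-colex is a finite set of points. For $d\ge1$, a colorable $d$-ball $\mathcal{B}_v$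 is the set of $d$-simplices $\{v*\delta:\delta\in\Delta_{d-1}(K)\}$ (where $v*\delta$ is the simplex spanned by $v$ and the vertices of $\delta$) for a $(d-1)$-colex $K$ homeomorphic to the $(d-1)$-sphere and a vertex $v\notin K$; its boundary is $\partial\mathcal{B}_v=K$. For $d\ge1$, a $d$-colex (without boundary) $\mathcal{L}$ is a homogeneous simplicial $d$-complex which is a finite union of colorable $d$-balls (sharing no $d$-simplex) glued along their boundaries so that every $(d-1)$-simplex lies in the boundary of exactly two distinct balls, and whose vertices are $(d+1)$-colorable: there is $\mathrm{col}:\Delta_0(\mathcal{L})\to\mathbb{Z}_{d+1}=\{0,\dots,d\}$ assigning distinct colors to the endpoints of every edge. Standing structure: for every vertex $v$, the set of $d$-simplices containing $v$ is the colorable $d$-ball centered at $v$, whose boundary is a $(d-1)$-colex homeomorphic to a $(d-1)$-sphere. For a simplex or chain $\alpha$, $\mathrm{col}(\alpha)$ is the set of colors of its vertices, and $\Delta_0^{c}(\alpha)$ is the set of vertices of color $c$ of simplices of $\alpha$. For an $n$-chain $\alpha$ and vertex $v$, $\alpha|_v=\alpha\cap\mathrm{Star}_n(v)$. *)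

theory Defs
  imports "HOL-Analysis.Analysis"
begin

(* A finite simplicial complex over vertex type 'v is represented by the set of all its
   simplices; a simplex is a nonempty finite set of vertices, a k-simplex has k+1 vertices. *)

definition simplicial_complex :: "'v set set \<Rightarrow> bool" where
  "simplicial_complex L \<longleftrightarrow> finite L \<and>
     (\<forall>s\<in>L. s \<noteq> {} \<and> finite s \<and> (\<forall>t. t \<subseteq> s \<and> t \<noteq> {} \<longrightarrow> t \<in> L))"

definition simplices :: "'v set set \<Rightarrow> nat \<Rightarrow> 'v set set" where
  "simplices L k = {s\<in>L. card s = Suc k}"

definition faces :: "'v set \<Rightarrow> nat \<Rightarrow> 'v set set" where
  "faces \<kappa> l = {s. s \<subseteq> \<kappa> \<and> card s = Suc l}"

definition vertices :: "'v set set \<Rightarrow> 'v set" where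
  "vertices L = \<Union>L"

(* F_2-sum of a finite family of chains (chains = sets of simplices, addition = symmetric
   difference): an element belongs to the sum iff it lies in an odd number of summands *)
definition csum :: "'i set \<Rightarrow> ('i \<Rightarrow> 'a set) \<Rightarrow> 'a set" where
  "csum I f = {x. odd (card {i\<in>I. x \<in> f i})}"

definition Star :: "'v set set \<Rightarrow> nat \<Rightarrow> 'v set \<Rightarrow> 'v set set" where
  "Star L n \<kappa> = {\<nu>\<in>simplices L n. \<kappa> \<subseteq> \<nu>}"

definition Link :: "'v set set \<Rightarrow> nat \<Rightarrow> nat \<Rightarrow> 'v set \<Rightarrow> 'v set set" where
  "Link L d n \<kappa> = {\<nu>\<in>simplices L n. \<nu> \<inter> \<kappa> = {} \<and> (\<exists>\<sigma>\<in>simplices L d. \<kappa> \<union> \<nu> \<subseteq> \<sigma>)}"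

definition gbd :: "'v set set \<Rightarrow> nat \<Rightarrow> nat \<Rightarrow> 'v set set \<Rightarrow> 'v set set" where
  "gbd L j n \<alpha> = csum \<alpha> (\<lambda>\<kappa>. if n < j then faces \<kappa> n else Star L n \<kappa>)"

(* the usual boundary partial_k = partial_{k,k-1} (k \<ge> 1) *)
definition bd :: "'v set set \<Rightarrow> nat \<Rightarrow> 'v set set \<Rightarrow> 'v set set" where
  "bd L k \<alpha> = gbd L k (k - 1) \<alpha>"

(* proper vertex colouring with colours {0..<m} = Z_m *)
definition proper_coloring :: "'v set set \<Rightarrow> nat \<Rightarrow> ('v \<Rightarrow> nat) \<Rightarrow> bool" where
  "proper_coloring L m col \<longleftrightarrow> (\<forall>v\<in>vertices L. col v < m) \<and>
     (\<forall>e\<in>simplices L 1. \<forall>x\<in>e. \<forall>y\<in>e. x \<noteq> y \<longrightarrow> col x \<noteq> col y)"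

definition realization :: "'v set set \<Rightarrow> ('v \<Rightarrow> real) set" where
  "realization K = {f. (\<forall>x. 0 \<le> f x) \<and> {x. f x \<noteq> 0} \<in> K \<and> sum f {x. f x \<noteq> 0} = 1}"

definition realtop :: "'v set set \<Rightarrow> ('v \<Rightarrow> real) topology" where
  "realtop K = subtopology (product_topology (\<lambda>_. euclideanreal) UNIV) (realization K)"

(* the colorable ball v * K as set of top simplices *)
definition cone :: "'v \<Rightarrow> 'v set set \<Rightarrow> nat \<Rightarrow> 'v set set" where
  "cone v K n = {insert v \<delta> | \<delta>. \<delta> \<in> simplices K n}"

primrec colex :: "nat \<Rightarrow> 'v set set \<Rightarrow> bool" where
  "colex 0 L \<longleftrightarrow> finite L \<and> (\<forall>s\<in>L. \<exists>x. s = {x})"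
| "colex (Suc n) L \<longleftrightarrow>
     simplicial_complex L \<and>
     (\<forall>s\<in>L. card s \<le> Suc (Suc n)) \<and>
     (\<forall>s\<in>L. \<exists>t\<in>simplices L (Suc n). s \<subseteq> t) \<and>
     (\<exists>col. proper_coloring L (Suc (Suc n)) col) \<and>
     (\<exists>Bs :: ('v \<times> 'v set set) set. finite Bs \<and>
        (\<forall>(v,K)\<in>Bs. colex n K \<and> (realtop K homeomorphic_space nsphere n) \<and>
                    v \<notin> vertices K \<and> cone v K n \<subseteq> simplices L (Suc n)) \<and>
        (\<forall>b1\<in>Bs. \<forall>b2\<in>Bs. b1 \<noteq> b2 \<longrightarrow>
             cone (fst b1) (snd b1) n \<inter> cone (fst b2) (snd b2) n = {}) \<and>
        (\<Union>(v,K)\<in>Bs. cone v K n) = simplices L (Suc n) \<and>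
        (\<forall>(v,K)\<in>Bs. \<forall>\<sigma>\<in>simplices K n.
             card {b\<in>Bs. \<sigma> \<in> simplices (snd b) n} = 2))"

definition vertex_balls :: "'v set set \<Rightarrow> nat \<Rightarrow> bool" where
  "vertex_balls L d \<longleftrightarrow> (\<forall>v\<in>vertices L. \<exists>K. colex (d - 1) K \<and>
      (realtop K homeomorphic_space nsphere (d - 1)) \<and> v \<notin> vertices K \<and>
      Star L d {v} = cone v K (d - 1))"

definition colored_vertices :: "('v \<Rightarrow> nat) \<Rightarrow> nat \<Rightarrow> 'v set set \<Rightarrow> 'v set" where
  "colored_vertices col c \<alpha> = {v\<in>\<Union>\<alpha>. col v = c}"

definition colset :: "('v \<Rightarrow> nat) \<Rightarrow> 'v set set \<Rightarrow> nat set" where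
  "colset col \<alpha> = col ` (\<Union>\<alpha>)"

end

theory Submission
  imports Defs
begin


lemma csum_mem: "x \<in> csum I f \<longleftrightarrow> odd (card {i\<in>I. x \<in> f i})"
  by (simp add: csum_def)

lemma odd_card_filter_odd:
  assumes "finite A" shows "odd (card {x\<in>A. odd (f x)}) = odd (\<Sum>x\<in>A. (f x::nat))"
  using assms
proof (induction A rule: finite_induct)
  case empty then show ?case by simp
next
  case (insert a F)
  have "{x\<in>insert a F. odd (f x)} = (if odd (f a) then insert a {x\<in>F. odd (f x)} else {x\<in>F. odd (f x)})"
    by auto
  then show ?case using insert by auto
qed

lemma sum_par_cong:
  assumes "\<And>i. i\<in>I \<Longrightarrow> odd (f i) = odd (g i)"
  shows "odd (sum f I) = odd (sum (g::_\<Rightarrow>nat) I)"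
proof (cases "finite I")
  case True then show ?thesis using assms
    by (induction I rule: finite_induct) auto
next
  case False then show ?thesis by simp
qed

lemma card_filter_sum: "finite A \<Longrightarrow> card {x\<in>A. P x} = (\<Sum>x\<in>A. if P x then 1 else 0)"
  by (simp add: sum.inter_filter[symmetric])

lemma csum_count:
  assumes "finite I" "\<And>i. i\<in>I \<Longrightarrow> finite (F i)"
  shows "odd (card {x\<in>csum I F. Q x}) = odd (\<Sum>i\<in>I. card {x\<in>F i. Q x})"
proof -
  define U where "U = {x\<in>\<Union>(F`I). Q x}"
  have fU: "finite U" using assms by (simp add: U_def)
  have "{x\<in>csum I F. Q x} = {x\<in>U. odd (card {i\<in>I. x\<in>F i})}"
  proof (auto simp: csum_def U_def)
    fix x assume "odd (card {i \<in> I. x \<in> F i})"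
    then have "{i \<in> I. x \<in> F i} \<noteq> {}" by (metis card.empty even_zero)
    then show "\<exists>i\<in>I. x \<in> F i" by blast
  qed
  then have "odd (card {x\<in>csum I F. Q x}) = odd (\<Sum>x\<in>U. card {i\<in>I. x\<in>F i})"
    using odd_card_filter_odd[OF fU] by simp
  also have "(\<Sum>x\<in>U. card {i\<in>I. x\<in>F i}) = (\<Sum>x\<in>U. \<Sum>i\<in>I. if x\<in>F i then 1 else 0)"
    using assms(1) by (simp add: card_filter_sum)
  also have "\<dots> = (\<Sum>i\<in>I. \<Sum>x\<in>U. if x\<in>F i then 1 else 0)" by (rule sum.swap)
  also have "\<dots> = (\<Sum>i\<in>I. card {x\<in>F i. Q x})"
  proof (rule sum.cong[OF refl])
    fix i assume i: "i\<in>I"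
    have "{x\<in>F i. Q x} = {x\<in>U. x\<in>F i}" using i by (auto simp: U_def)
    then show "(\<Sum>x\<in>U. if x\<in>F i then 1 else 0) = card {x\<in>F i. Q x}"
      using fU by (simp add: card_filter_sum)
  qed
  finally show ?thesis .
qed

lemma colex_finite: "colex n K \<Longrightarrow> finite K"
  by (cases n) (auto simp: simplicial_complex_def)

lemma card_nsphere0: "card (topspace (nsphere 0)) = 2"
proof -
  define e :: "nat \<Rightarrow> real" where "e = (\<lambda>i. if i = 0 then 1 else 0)"
  define e' :: "nat \<Rightarrow> real" where "e' = (\<lambda>i. if i = 0 then -1 else 0)"
  have "topspace (nsphere 0) = {x. (x 0)^2 = 1 \<and> (\<forall>i>0. x i = 0)}"
    by (simp add: nsphere)
  also have "\<dots> = {e, e'}"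
  proof (auto simp: e_def e'_def)
    fix x :: "nat \<Rightarrow> real" assume a: "(x 0)\<^sup>2 = 1" "\<forall>i>0. x i = 0"
      "x \<noteq> (\<lambda>i. if i = 0 then 1 else 0)"
    from a(1) have "x 0 = 1 \<or> x 0 = -1" by (simp add: power2_eq_1_iff)
    moreover have "x 0 = 1 \<Longrightarrow> x = (\<lambda>i. if i = 0 then 1 else 0)"
      using a(2) by (intro ext) (metis gr0I)
    moreover have "x 0 = -1 \<Longrightarrow> x = (\<lambda>i. if i = 0 then -1 else 0)"
      using a(2) by (intro ext) (metis gr0I)
    ultimately show "x = (\<lambda>i. if i = 0 then -1 else 0)" using a(3) by blast
  qed
  finally have T: "topspace (nsphere 0) = {e, e'}" .
  have "e 0 \<noteq> e' 0" by (simp add: e_def e'_def)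
  then have "e \<noteq> e'" by metis
  then show ?thesis using T by simp
qed

lemma card_colex0:
  assumes "colex 0 K" "realtop K homeomorphic_space nsphere 0"
  shows "card K = 2"
proof -
  have fin: "finite K" and sg: "\<forall>s\<in>K. \<exists>x. s = {x}" using assms(1) by auto
  define h :: "'a set \<Rightarrow> 'a \<Rightarrow> real" where "h s = (\<lambda>x. if x\<in>s then 1 else 0)" for s
  have ts: "topspace (realtop K) = realization K"
    by (simp add: realtop_def)
  have R: "realization K = h ` K"
  proof
    show "realization K \<subseteq> h ` K"
    proof
      fix f assume f: "f \<in> realization K"
      then have s: "{x. f x \<noteq> 0} \<in> K" and sm: "sum f {x. f x \<noteq> 0} = 1"
        unfolding realization_def by blast+
      then obtain a where a: "{x. f x \<noteq> 0} = {a}" using sg by blast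
      have fa: "f a = 1" using sm unfolding a by simp
      have "f x = h {a} x" for x
      proof (cases "x = a")
        case True then show ?thesis using fa by (simp add: h_def)
      next
        case False then have "x \<notin> {x. f x \<noteq> 0}" using a by blast
        then show ?thesis using False by (simp add: h_def)
      qed
      then have "f = h {a}" by (intro ext)
      then show "f \<in> h ` K" using s a by auto
    qed
  next
    show "h ` K \<subseteq> realization K"
    proof
      fix f assume "f \<in> h ` K"
      then obtain t where t: "t \<in> K" "f = h t" by blast
      obtain a where "t = {a}" using sg t(1) by blast
      then have a: "{a} \<in> K" "f = h {a}" using t by auto
      have sup: "{x. f x \<noteq> 0} = {a}" unfolding a(2) h_def by auto
      have "\<forall>x. 0 \<le> f x" unfolding a(2) h_def by simp
      moreover have "sum f {a} = 1" unfolding a(2) h_def by simp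
      ultimately show "f \<in> realization K" using a(1) sup unfolding realization_def by simp
    qed
  qed
  have inj: "inj_on h K"
  proof
    fix s t assume "s\<in>K" "t\<in>K" "h s = h t"
    have "\<And>s. {x. h s x \<noteq> 0} = s" by (auto simp: h_def)
    then show "s = t" using \<open>h s = h t\<close> by metis
  qed
  have "card (realization K) = card K" using R inj by (simp add: card_image)
  moreover obtain f where f: "homeomorphic_map (realtop K) (nsphere 0) f"
    using assms(2) homeomorphic_space by blast
  then have "card (topspace (realtop K)) = card (topspace (nsphere 0))"
    by (metis card_image homeomorphic_imp_injective_map homeomorphic_imp_surjective_map)
  ultimately show ?thesis using ts card_nsphere0 by simp
qed



lemma cone_eq: "cone v K n = insert v ` simplices K n"
  by (auto simp: cone_def)

lemma colex_step:
  fixes L :: "'a set set"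
  assumes cx: "colex (Suc n) L" and ft: "finite \<tau>" and ct: "card \<tau> = Suc n"
    and H: "\<And>(K::'a set set) \<tau>'. colex n K \<Longrightarrow> realtop K homeomorphic_space nsphere n \<Longrightarrow> finite \<tau>' \<Longrightarrow>
              card \<tau>' = n \<Longrightarrow> even (card {\<delta>\<in>simplices K n. \<tau>' \<subseteq> \<delta>})"
  shows "even (card {\<sigma>\<in>simplices L (Suc n). \<tau> \<subseteq> \<sigma>})"
proof -
  from cx obtain Bs where fin: "finite Bs"
    and B: "\<forall>(v,K)\<in>Bs. colex n K \<and> (realtop K homeomorphic_space nsphere n) \<and>
                    v \<notin> vertices K \<and> cone v K n \<subseteq> simplices L (Suc n)"
    and disj: "\<forall>b1\<in>Bs. \<forall>b2\<in>Bs. b1 \<noteq> b2 \<longrightarrow>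
             cone (fst b1) (snd b1) n \<inter> cone (fst b2) (snd b2) n = {}"
    and U: "(\<Union>(v,K)\<in>Bs. cone v K n) = simplices L (Suc n)"
    and two: "\<forall>(v,K)\<in>Bs. \<forall>\<sigma>\<in>simplices K n. card {b\<in>Bs. \<sigma> \<in> simplices (snd b) n} = 2"
    by (auto simp only: colex.simps)
  define X where "X b = {\<sigma>\<in>cone (fst b) (snd b) n. \<tau> \<subseteq> \<sigma>}" for b
  have eqU: "{\<sigma>\<in>simplices L (Suc n). \<tau> \<subseteq> \<sigma>} = (\<Union>b\<in>Bs. X b)"
  proof -
    have U': "(\<Union>b\<in>Bs. cone (fst b) (snd b) n) = simplices L (Suc n)"
      using U by (simp add: case_prod_beta)
    show ?thesis unfolding X_def U'[symmetric] by blast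
  qed
  have finX: "finite (X b)" if "b \<in> Bs" for b
  proof -
    obtain v K where vK: "b = (v, K)" by (cases b)
    have "colex n K" using B that vK by auto
    then have "finite (snd b)" using colex_finite vK by simp
    then show ?thesis by (simp add: X_def cone_eq simplices_def)
  qed
  have cardU: "card {\<sigma>\<in>simplices L (Suc n). \<tau> \<subseteq> \<sigma>} = (\<Sum>b\<in>Bs. card (X b))"
    unfolding eqU
  proof (rule card_UN_disjoint[OF fin])
    show "\<forall>b\<in>Bs. finite (X b)" using finX by blast
    show "\<forall>i\<in>Bs. \<forall>j\<in>Bs. i \<noteq> j \<longrightarrow> X i \<inter> X j = {}"
      using disj unfolding X_def by blast
  qed
  define e where "e b = (if fst b \<in> \<tau> then card {\<delta>\<in>simplices (snd b) n. \<tau> - {fst b} \<subseteq> \<delta>} else 0)" for b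
  have cX: "card (X b) = e b + (if \<tau> \<in> simplices (snd b) n then 1 else 0)" and ee: "even (e b)"
    if b: "b \<in> Bs" for b
  proof -
    obtain v K where vK: "b = (v, K)" by (cases b)
    have cK: "colex n K" and hK: "realtop K homeomorphic_space nsphere n" and vn: "v \<notin> vertices K"
      using B b vK by auto
    have inj: "inj_on (insert v) (simplices K n)"
    proof
      fix x y assume "x \<in> simplices K n" "y \<in> simplices K n" "insert v x = insert v y"
      moreover have "v \<notin> x" "v \<notin> y" using vn \<open>x \<in> simplices K n\<close> \<open>y \<in> simplices K n\<close>
        by (auto simp: vertices_def simplices_def)
      ultimately show "x = y" by (metis insert_ident)
    qed
    show "card (X b) = e b + (if \<tau> \<in> simplices (snd b) n then 1 else 0)"
    proof (cases "v \<in> \<tau>")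
      case True
      have tn: "\<tau> \<notin> simplices K n" using True vn by (auto simp: vertices_def simplices_def)
      have "X b = insert v ` {\<delta>\<in>simplices K n. \<tau> - {v} \<subseteq> \<delta>}"
        using True by (auto simp: X_def vK cone_eq)
      then have "card (X b) = card {\<delta>\<in>simplices K n. \<tau> - {v} \<subseteq> \<delta>}"
        by (metis (no_types, lifting) card_image inj inj_on_subset mem_Collect_eq subsetI)
      then show ?thesis using True tn by (simp add: e_def vK)
    next
      case False
      have "X b = (if \<tau> \<in> simplices K n then {insert v \<tau>} else {})"
      proof -
        have "\<delta> = \<tau>" if "\<delta> \<in> simplices K n" "\<tau> \<subseteq> insert v \<delta>" for \<delta>
        proof -
          have "\<tau> \<subseteq> \<delta>" using that(2) False by blast
          moreover have "card \<delta> = Suc n" "finite \<delta>" using that(1)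
            by (auto simp: simplices_def intro: card_ge_0_finite)
          ultimately show ?thesis using ct by (metis card_subset_eq)
        qed
        then show ?thesis by (auto simp: X_def vK cone_eq)
      qed
      then show ?thesis using False by (simp add: e_def vK)
    qed
    show "even (e b)"
    proof (cases "v \<in> \<tau>")
      case True
      then show ?thesis using H[OF cK hK, of "\<tau> - {v}"] ft ct by (simp add: e_def vK)
    next
      case False then show ?thesis by (simp add: e_def vK)
    qed
  qed
  have "(\<Sum>b\<in>Bs. card (X b)) = (\<Sum>b\<in>Bs. e b) + (\<Sum>b\<in>Bs. if \<tau> \<in> simplices (snd b) n then 1 else 0)"
    using cX by (simp add: sum.distrib)
  also have "(\<Sum>b\<in>Bs. if \<tau> \<in> simplices (snd b) n then 1 else 0) = card {b\<in>Bs. \<tau> \<in> simplices (snd b) n}"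
    using fin by (simp add: card_filter_sum)
  finally have S: "card {\<sigma>\<in>simplices L (Suc n). \<tau> \<subseteq> \<sigma>} = (\<Sum>b\<in>Bs. e b) + card {b\<in>Bs. \<tau> \<in> simplices (snd b) n}"
    using cardU by simp
  have E1: "even (\<Sum>b\<in>Bs. e b)" using ee by (simp add: dvd_sum)
  have E2: "even (card {b\<in>Bs. \<tau> \<in> simplices (snd b) n})"
  proof (cases "{b\<in>Bs. \<tau> \<in> simplices (snd b) n} = {}")
    case True then show ?thesis by (simp only: card.empty even_zero)
  next
    case False
    then obtain b where "b \<in> Bs" "\<tau> \<in> simplices (snd b) n" by blast
    then show ?thesis using two by (cases b) fastforce
  qed
  show ?thesis using S E1 E2 by simp
qed

lemma colex_even:
  fixes L :: "'a set set"
  shows "colex (Suc m) L \<Longrightarrow> finite \<tau> \<Longrightarrow> card \<tau> = Suc m \<Longrightarrow> even (card {\<sigma>\<in>simplices L (Suc m). \<tau> \<subseteq> \<sigma>})"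
proof (induction m arbitrary: L \<tau>)
  case 0
  show ?case
  proof (rule colex_step[OF 0(1-3)])
    fix K :: "'a set set" and \<tau>' :: "'a set"
    assume K: "colex 0 K" "realtop K homeomorphic_space nsphere 0" "finite \<tau>'" "card \<tau>' = 0"
    then have "\<tau>' = {}" by simp
    moreover have "simplices K 0 = K" using K(1) by (auto simp: simplices_def)
    ultimately show "even (card {\<delta>\<in>simplices K 0. \<tau>' \<subseteq> \<delta>})" using card_colex0[OF K(1,2)] by simp
  qed
next
  case (Suc m)
  show ?case
    by (rule colex_step[OF Suc(2-4)]) (use Suc.IH in blast)
qed



lemma sc_face: "simplicial_complex L \<Longrightarrow> s \<in> L \<Longrightarrow> t \<subseteq> s \<Longrightarrow> t \<noteq> {} \<Longrightarrow> t \<in> L"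
  unfolding simplicial_complex_def by blast

lemma sc_fin: "simplicial_complex L \<Longrightarrow> s \<in> L \<Longrightarrow> finite s"
  by (auto simp: simplicial_complex_def)

lemma simplex_inj:
  assumes sc: "simplicial_complex L" and pc: "proper_coloring L m col" and s: "s \<in> L"
  shows "inj_on col s"
proof
  fix x y assume xy: "x \<in> s" "y \<in> s" "col x = col y"
  show "x = y"
  proof (rule ccontr)
    assume ne: "x \<noteq> y"
    have "{x,y} \<in> L" using sc_face[OF sc s] xy by auto
    moreover have "card {x,y} = 2" using ne by simp
    ultimately have "{x,y} \<in> simplices L 1" by (simp add: simplices_def)
    then show False using pc ne xy(3) by (auto simp: proper_coloring_def)
  qed
qed

lemma simplex_colrange:
  assumes pc: "proper_coloring L m col" and s: "s \<in> L"
  shows "col ` s \<subseteq> {..<m}"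
  using pc s by (auto simp: proper_coloring_def vertices_def)

lemma top_col:
  assumes sc: "simplicial_complex L" and pc: "proper_coloring L (Suc d) col" and s: "s \<in> simplices L d"
  shows "col ` s = {..<Suc d}"
proof -
  have sL: "s \<in> L" and cs: "card s = Suc d" using s by (auto simp: simplices_def)
  have "card (col ` s) = Suc d" using simplex_inj[OF sc pc sL] cs by (simp add: card_image)
  then show ?thesis using simplex_colrange[OF pc sL] by (simp add: card_subset_eq)
qed

lemma even_star:
  fixes L :: "'a set set"
  assumes cx: "colex (Suc d') L" and pc: "proper_coloring L (Suc (Suc d')) col"
    and ft: "finite \<tau>" and ct: "card \<tau> \<le> Suc d'"
  shows "even (card {\<sigma>\<in>simplices L (Suc d'). \<tau> \<subseteq> \<sigma>})"
proof -
  define d where "d = Suc d'"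
  have sc: "simplicial_complex L" using cx by simp
  have finL: "finite L" using sc by (simp add: simplicial_complex_def)
  define X where "X = {\<sigma>\<in>simplices L d. \<tau> \<subseteq> \<sigma>}"
  have fX: "finite X" using finL by (simp add: X_def simplices_def)
  show ?thesis
  proof (cases "X = {}")
    case True
    then have "{\<sigma>\<in>simplices L (Suc d'). \<tau> \<subseteq> \<sigma>} = {}" by (simp add: X_def d_def)
    then show ?thesis by (simp only: card.empty even_zero)
  next
    case False
    then obtain \<sigma>0 where s0: "\<sigma>0 \<in> simplices L d" "\<tau> \<subseteq> \<sigma>0" by (auto simp: X_def)
    have "col ` \<tau> \<subseteq> {..<Suc d}" using top_col[OF sc _ s0(1)] pc s0(2) by (auto simp: d_def)
    have "card (col ` \<tau>) \<le> d" using ct card_image_le[OF ft, of col] by (simp add: d_def)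
    then have "\<not> {..<Suc d} \<subseteq> col ` \<tau>"
      by (metis card_lessThan card_mono finite_imageI ft not_less_eq_eq)
    then obtain c where c: "c < Suc d" "c \<notin> col ` \<tau>" by auto
    define f where "f \<sigma> = {x\<in>\<sigma>. col x \<noteq> c}" for \<sigma>
    have cf: "card (f \<sigma>) = d" "f \<sigma> \<subseteq> \<sigma>" "finite (f \<sigma>)" if "\<sigma> \<in> simplices L d" for \<sigma>
    proof -
      have cc: "col ` \<sigma> = {..<Suc d}" using top_col[OF sc _ that] pc by (simp add: d_def)
      then obtain x0 where x0: "x0 \<in> \<sigma>" "col x0 = c" using c by (metis imageE lessThan_iff)
      have sL: "\<sigma> \<in> L" and cs: "card \<sigma> = Suc d" using that by (auto simp: simplices_def)
      have inj: "inj_on col \<sigma>" using simplex_inj[OF sc pc sL] .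
      have "f \<sigma> = \<sigma> - {x0}" using x0 inj by (auto simp: f_def inj_on_def)
      moreover have "finite \<sigma>" using sc_fin[OF sc sL] .
      ultimately show "card (f \<sigma>) = d" "f \<sigma> \<subseteq> \<sigma>" "finite (f \<sigma>)" using cs x0 by auto
    qed
    have "card X = (\<Sum>\<sigma>\<in>X. 1)" by simp
    also have "\<dots> = (\<Sum>\<rho>\<in>f ` X. \<Sum>\<sigma>\<in>{\<sigma>. \<sigma> \<in> X \<and> f \<sigma> = \<rho>}. 1)"
      by (rule sum.group[symmetric]) (use fX in auto)
    also have "\<dots> = (\<Sum>\<rho>\<in>f ` X. card {\<sigma>\<in>simplices L d. \<rho> \<subseteq> \<sigma>})"
    proof (rule sum.cong[OF refl])
      fix \<rho> assume "\<rho> \<in> f ` X"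
      then obtain \<sigma>1 where s1: "\<sigma>1 \<in> X" "\<rho> = f \<sigma>1" by blast
      have "{\<sigma>. \<sigma> \<in> X \<and> f \<sigma> = \<rho>} = {\<sigma>\<in>simplices L d. \<rho> \<subseteq> \<sigma>}"
      proof (intro equalityI subsetI)
        fix \<sigma> assume "\<sigma> \<in> {\<sigma>. \<sigma> \<in> X \<and> f \<sigma> = \<rho>}"
        then show "\<sigma> \<in> {\<sigma>\<in>simplices L d. \<rho> \<subseteq> \<sigma>}" using cf(2) by (auto simp: X_def)
      next
        fix \<sigma> assume a: "\<sigma> \<in> {\<sigma>\<in>simplices L d. \<rho> \<subseteq> \<sigma>}"
        then have sd: "\<sigma> \<in> simplices L d" and rs: "\<rho> \<subseteq> \<sigma>" by auto
        have "\<tau> \<subseteq> \<rho>" using s1 c(2) by (auto simp: X_def f_def)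
        then have "\<sigma> \<in> X" using sd rs by (auto simp: X_def)
        moreover have "\<rho> \<subseteq> f \<sigma>" using rs s1 by (auto simp: f_def)
        moreover have "card \<rho> = d" "card (f \<sigma>) = d" "finite (f \<sigma>)"
          using cf s1 sd by (auto simp: X_def)
        ultimately show "\<sigma> \<in> {\<sigma>. \<sigma> \<in> X \<and> f \<sigma> = \<rho>}" by (metis (mono_tags) card_subset_eq mem_Collect_eq)
      qed
      then show "(\<Sum>\<sigma>\<in>{\<sigma>. \<sigma> \<in> X \<and> f \<sigma> = \<rho>}. 1) = card {\<sigma>\<in>simplices L d. \<rho> \<subseteq> \<sigma>}" by simp
    qed
    finally have eq: "card X = (\<Sum>\<rho>\<in>f ` X. card {\<sigma>\<in>simplices L d. \<rho> \<subseteq> \<sigma>})" .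
    have "even (card {\<sigma>\<in>simplices L d. \<rho> \<subseteq> \<sigma>})" if r: "\<rho> \<in> f ` X" for \<rho>
    proof -
      obtain \<sigma>1 where s1: "\<sigma>1 \<in> X" "\<rho> = f \<sigma>1" using r by blast
      then have "finite \<rho>" "card \<rho> = Suc d'" using cf by (auto simp: X_def d_def)
      then show ?thesis using colex_even[OF cx] by (simp add: d_def)
    qed
    then have "even (card X)" unfolding eq by (simp add: dvd_sum)
    then show ?thesis by (simp add: X_def d_def)
  qed
qed



theorem lemma6:
  fixes L :: "'v set set" and d k c_star :: nat and C :: "nat set"
    and col :: "'v \<Rightarrow> nat" and \<gamma> :: "'v set set" and \<Omega> :: "'v \<Rightarrow> 'v set set"
  assumes colex: "colex d L"
    and standing: "vertex_balls L d"
    and col: "proper_coloring L (Suc d) col"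
    and k: "1 \<le> k" "k < d"
    and C: "C \<subseteq> {..<Suc d}" "card C = k"
    and cstar: "c_star < Suc d" "c_star \<notin> C"
    and cycle: "\<gamma> \<subseteq> simplices L k" "bd L k \<gamma> = {}"
    and colgamma: "colset col \<gamma> \<subseteq> insert c_star C"
    and Omega: "\<forall>v\<in>colored_vertices col c_star \<gamma>.
        \<Omega> v \<subseteq> Star L (d - k) {v} \<and>
        (\<forall>\<mu>\<in>\<Omega> v. col ` \<mu> = {..<Suc d} - C) \<and>
        csum (\<Omega> v) (Link L d (k - 1)) = bd L k (\<gamma> \<inter> Star L k {v})"
  defines "lam \<equiv> csum (SIGMA v:colored_vertices col c_star \<gamma>. \<Omega> v) (\<lambda>(v, \<mu>). Star L d \<mu>)"
  shows "(lam \<subseteq> simplices L d \<and> gbd L d (k - 1) lam = {}) \<and>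
         ((\<nexists>\<beta>. \<beta> \<subseteq> simplices L (Suc k) \<and> \<gamma> = bd L (Suc k) \<beta>) \<longrightarrow>
         (\<nexists>\<beta>. \<beta> \<subseteq> simplices L (d - k - 1) \<and> lam = gbd L (d - k - 1) d \<beta>))"
proof -
  obtain d' where d': "d = Suc d'" using k by (cases d) auto
  have sc: "simplicial_complex L" using colex d' by simp
  have finL: "finite L" using sc by (simp add: simplicial_complex_def)
  have finS: "finite (simplices L n)" for n using finL by (simp add: simplices_def)
  have simpD: "card s = Suc n" "s \<in> L" "finite s" if "s \<in> simplices L n" for s n
    using that sc_fin[OF sc] by (auto simp: simplices_def)
  define S where "S = insert c_star C"
  have finC: "finite C" using C(2) k(1) by (metis card.infinite not_one_le_zero)
  have cS: "card S = Suc k" using finC cstar(2) C(2) by (simp add: S_def)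
  have Ssub: "S \<subseteq> {..<Suc d}" using C(1) cstar(1) by (auto simp: S_def)
  define N where "N X = card {\<sigma>\<in>simplices L d. X \<subseteq> \<sigma>}" for X
  have Nev: "even (N X)" if "finite X" "card X \<le> d" for X
    using even_star[of d' L col X] colex col that by (simp add: N_def d')
  have Nbig: "N X = (if X \<in> simplices L d then 1 else 0)" if "finite X" "card X = Suc d" for X
  proof -
    have "{\<sigma>\<in>simplices L d. X \<subseteq> \<sigma>} = (if X \<in> simplices L d then {X} else {})"
    proof -
      have "\<sigma> = X" if "\<sigma> \<in> simplices L d" "X \<subseteq> \<sigma>" for \<sigma>
        using simpD[OF that(1)] that(2) \<open>card X = Suc d\<close> by (metis card_subset_eq)
      then show ?thesis by auto
    qed
    then show ?thesis by (simp add: N_def)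
  qed
  have Nzero: "N X = 0" if "finite X" "card X > Suc d" for X
  proof -
    have "{\<sigma>\<in>simplices L d. X \<subseteq> \<sigma>} = {}"
    proof -
      have False if s: "\<sigma> \<in> simplices L d" "X \<subseteq> \<sigma>" for \<sigma>
      proof -
        have "card X \<le> card \<sigma>" using card_mono[OF simpD(3)[OF s(1)] s(2)] .
        then show False using simpD(1)[OF s(1)] \<open>card X > Suc d\<close> by linarith
      qed
      then show ?thesis by blast
    qed
    then show ?thesis unfolding N_def by (simp only: card.empty)
  qed
  define V where "V = colored_vertices col c_star \<gamma>"
  define P where "P = (SIGMA v:V. \<Omega> v)"
  have finG: "finite \<gamma>" using cycle(1) finS finite_subset by blast
  have finV: "finite V"
  proof -
    have "V \<subseteq> \<Union>\<gamma>" by (auto simp: V_def colored_vertices_def)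
    moreover have "finite (\<Union>\<gamma>)" using finG cycle(1) simpD by blast
    ultimately show ?thesis using finite_subset by blast
  qed
  have OmV: "\<Omega> v \<subseteq> Star L (d - k) {v}" "\<forall>\<mu>\<in>\<Omega> v. col ` \<mu> = {..<Suc d} - C"
     "csum (\<Omega> v) (Link L d (k - 1)) = bd L k (\<gamma> \<inter> Star L k {v})" if "v \<in> V" for v
    using Omega that by (auto simp: V_def)
  have finOm: "finite (\<Omega> v)" if "v \<in> V" for v
    using OmV(1)[OF that] finS[of "d-k"] by (auto simp: Star_def intro: finite_subset)
  have finP: "finite P" using finV finOm by (simp add: P_def)
  have lamP: "lam = csum P (\<lambda>(v, \<mu>). Star L d \<mu>)" by (simp add: lam_def P_def V_def)
  have Pf: "\<mu> \<in> simplices L (d - k)" "v \<in> \<mu>" "col v = c_star" "col ` \<mu> = {..<Suc d} - C"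
      "inj_on col \<mu>" "card \<mu> = Suc (d - k)" "finite \<mu>" if "(v, \<mu>) \<in> P" for v \<mu>
  proof -
    have vV: "v \<in> V" and mO: "\<mu> \<in> \<Omega> v" using that by (auto simp: P_def)
    show ms: "\<mu> \<in> simplices L (d - k)" "v \<in> \<mu>" using OmV(1)[OF vV] mO by (auto simp: Star_def)
    show "col v = c_star" using vV by (simp add: V_def colored_vertices_def)
    show "col ` \<mu> = {..<Suc d} - C" using OmV(2)[OF vV] mO by auto
    show "inj_on col \<mu>" using simplex_inj[OF sc col simpD(2)[OF ms(1)]] .
    show "card \<mu> = Suc (d - k)" "finite \<mu>" using simpD[OF ms(1)] by auto
  qed
  have gam: "card \<kappa> = Suc k" "\<kappa> \<in> L" "finite \<kappa>" "col ` \<kappa> = S" "inj_on col \<kappa>" if "\<kappa> \<in> \<gamma>" for \<kappa>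
  proof -
    have ks: "\<kappa> \<in> simplices L k" using that cycle(1) by blast
    show c: "card \<kappa> = Suc k" "\<kappa> \<in> L" "finite \<kappa>" using simpD[OF ks] by auto
    show inj: "inj_on col \<kappa>" using simplex_inj[OF sc col c(2)] .
    have "col ` \<kappa> \<subseteq> S" using colgamma that by (auto simp: colset_def S_def)
    moreover have "card (col ` \<kappa>) = card S" using inj c cS by (simp add: card_image)
    ultimately show "col ` \<kappa> = S" using finC by (simp add: S_def card_subset_eq)
  qed
  have LinkC: "odd (N (\<mu> \<union> \<nu>)) \<longleftrightarrow> \<nu> \<in> Link L d (k - 1) \<mu>"
    if ms: "\<mu> \<in> simplices L (d - k)" and fn: "finite \<nu>" and cn: "card \<nu> = k" for \<mu> \<nu>
  proof -
    have cm: "card \<mu> = Suc (d - k)" and fm: "finite \<mu>" and mL: "\<mu> \<in> L" using simpD[OF ms] by auto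
    show ?thesis
    proof (cases "\<mu> \<inter> \<nu> = {}")
      case False
      then have "card (\<mu> \<inter> \<nu>) \<ge> 1" using fm by (simp add: Suc_le_eq card_gt_0_iff)
      moreover have "card (\<mu> \<union> \<nu>) + card (\<mu> \<inter> \<nu>) = card \<mu> + card \<nu>"
        using card_Un_Int[OF fm fn] by simp
      ultimately have "card (\<mu> \<union> \<nu>) \<le> d" using cm cn k by linarith
      then have "even (N (\<mu> \<union> \<nu>))" using Nev fm fn by simp
      moreover have "\<nu> \<notin> Link L d (k - 1) \<mu>" using False by (auto simp: Link_def)
      ultimately show ?thesis by simp
    next
      case True
      have cu: "card (\<mu> \<union> \<nu>) = Suc d" using card_Un_disjoint[OF fm fn True] cm cn k by simp
      have "\<nu> \<in> Link L d (k - 1) \<mu> \<longleftrightarrow> \<mu> \<union> \<nu> \<in> simplices L d"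
      proof
        assume "\<nu> \<in> Link L d (k - 1) \<mu>"
        then obtain \<sigma> where s: "\<sigma> \<in> simplices L d" "\<mu> \<union> \<nu> \<subseteq> \<sigma>" by (auto simp: Link_def)
        then have "\<sigma> = \<mu> \<union> \<nu>" using simpD[OF s(1)] cu by (metis card_subset_eq)
        then show "\<mu> \<union> \<nu> \<in> simplices L d" using s by simp
      next
        assume a: "\<mu> \<union> \<nu> \<in> simplices L d"
        have "\<nu> \<noteq> {}" using cn k by auto
        then have "\<nu> \<in> L" using sc_face[OF sc simpD(2)[OF a]] by blast
        then have "\<nu> \<in> simplices L (k - 1)" using cn k by (simp add: simplices_def)
        then show "\<nu> \<in> Link L d (k - 1) \<mu>" using a True by (auto simp: Link_def)
      qed
      then show ?thesis using Nbig[of "\<mu> \<union> \<nu>"] cu fm fn by simp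
    qed
  qed
  have bdk: "x \<in> bd L k \<alpha> \<longleftrightarrow> odd (card {\<kappa>\<in>\<alpha>. x \<in> faces \<kappa> (k - 1)})" for x \<alpha>
    using k by (simp add: bd_def gbd_def csum_def)
  have PV: "odd (card {\<mu>\<in>\<Omega> v. \<nu> \<in> Link L d (k - 1) \<mu>}) \<longleftrightarrow> odd (card {\<kappa>\<in>\<gamma>. v \<in> \<kappa> \<and> \<nu> \<subseteq> \<kappa>})"
    if vV: "v \<in> V" and cn: "card \<nu> = k" for v \<nu>
  proof -
    have "odd (card {\<mu>\<in>\<Omega> v. \<nu> \<in> Link L d (k - 1) \<mu>}) \<longleftrightarrow> \<nu> \<in> csum (\<Omega> v) (Link L d (k - 1))"
      by (simp add: csum_def)
    also have "\<dots> \<longleftrightarrow> \<nu> \<in> bd L k (\<gamma> \<inter> Star L k {v})" using OmV(3)[OF vV] by simp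
    also have "\<dots> \<longleftrightarrow> odd (card {\<kappa>\<in>\<gamma> \<inter> Star L k {v}. \<nu> \<in> faces \<kappa> (k - 1)})" by (rule bdk)
    also have "{\<kappa>\<in>\<gamma> \<inter> Star L k {v}. \<nu> \<in> faces \<kappa> (k - 1)} = {\<kappa>\<in>\<gamma>. v \<in> \<kappa> \<and> \<nu> \<subseteq> \<kappa>}"
      using cycle(1) cn k by (auto simp: Star_def faces_def)
    finally show ?thesis .
  qed
  have part1a: "lam \<subseteq> simplices L d"
  proof
    fix x assume "x \<in> lam"
    then have "odd (card {p\<in>P. x \<in> (case p of (v, \<mu>) \<Rightarrow> Star L d \<mu>)})" by (simp add: lamP csum_def)
    then have "{p\<in>P. x \<in> (case p of (v, \<mu>) \<Rightarrow> Star L d \<mu>)} \<noteq> {}" by (metis card.empty even_zero)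
    then show "x \<in> simplices L d" by (auto simp: Star_def)
  qed
  have vone: "{v\<in>V. v \<in> \<kappa>} = {x\<in>\<kappa>. col x = c_star}" "card {v\<in>V. v \<in> \<kappa>} = 1" if kg: "\<kappa> \<in> \<gamma>" for \<kappa>
  proof -
    show e: "{v\<in>V. v \<in> \<kappa>} = {x\<in>\<kappa>. col x = c_star}"
      using kg by (auto simp: V_def colored_vertices_def)
    have "c_star \<in> col ` \<kappa>" using gam(4)[OF kg] by (simp add: S_def)
    then obtain w where w: "w \<in> \<kappa>" "col w = c_star" by blast
    have "{x\<in>\<kappa>. col x = c_star} = {w}" using w gam(5)[OF kg] by (auto simp: inj_on_def)
    then show "card {v\<in>V. v \<in> \<kappa>} = 1" using e by simp
  qed
  have part1b: "gbd L d (k - 1) lam = {}"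
  proof -
    have "\<nu> \<notin> gbd L d (k - 1) lam" for \<nu>
    proof
      assume a: "\<nu> \<in> gbd L d (k - 1) lam"
      have kd: "k - 1 < d" using k by simp
      from a have o: "odd (card {\<sigma>\<in>lam. \<nu> \<in> faces \<sigma> (k - 1)})" using kd by (simp add: gbd_def csum_def)
      have cn: "card \<nu> = k"
      proof (rule ccontr)
        assume "card \<nu> \<noteq> k"
        then have "{\<sigma>\<in>lam. \<nu> \<in> faces \<sigma> (k - 1)} = {}" using k by (auto simp: faces_def)
        then show False using o by (metis card.empty even_zero)
      qed
      have fn: "finite \<nu>" using cn k by (metis card.infinite not_one_le_zero)
      have e1: "{\<sigma>\<in>lam. \<nu> \<in> faces \<sigma> (k - 1)} = {\<sigma>\<in>lam. \<nu> \<subseteq> \<sigma>}" using cn k by (auto simp: faces_def)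
      have finSt: "finite (Star L n \<mu>)" for n \<mu> using finS[of n] by (simp add: Star_def)
      have "odd (card {\<sigma>\<in>lam. \<nu> \<subseteq> \<sigma>}) \<longleftrightarrow> odd (\<Sum>p\<in>P. card {\<sigma>\<in>(case p of (v, \<mu>) \<Rightarrow> Star L d \<mu>). \<nu> \<subseteq> \<sigma>})"
        unfolding lamP by (rule csum_count[OF finP]) (auto simp: finSt)
      also have "(\<Sum>p\<in>P. card {\<sigma>\<in>(case p of (v, \<mu>) \<Rightarrow> Star L d \<mu>). \<nu> \<subseteq> \<sigma>}) = (\<Sum>p\<in>P. N (snd p \<union> \<nu>))"
        by (rule sum.cong) (auto simp: N_def Star_def)
      also have "odd (\<Sum>p\<in>P. N (snd p \<union> \<nu>)) \<longleftrightarrow> odd (\<Sum>p\<in>P. if \<nu> \<in> Link L d (k - 1) (snd p) then 1 else 0::nat)"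
      proof (rule sum_par_cong)
        fix p assume "p \<in> P"
        then obtain v \<mu> where p: "p = (v, \<mu>)" "(v, \<mu>) \<in> P" by (cases p) auto
        show "odd (N (snd p \<union> \<nu>)) = odd (if \<nu> \<in> Link L d (k - 1) (snd p) then 1 else 0::nat)"
          using LinkC[OF Pf(1)[OF p(2)] fn cn] p(1) by simp
      qed
      also have "(\<Sum>p\<in>P. if \<nu> \<in> Link L d (k - 1) (snd p) then 1 else 0::nat) = (\<Sum>v\<in>V. \<Sum>\<mu>\<in>\<Omega> v. if \<nu> \<in> Link L d (k - 1) \<mu> then 1 else 0::nat)"
        unfolding P_def by (subst sum.Sigma) (use finV finOm in \<open>auto simp: case_prod_beta\<close>)
      also have "\<dots> = (\<Sum>v\<in>V. card {\<mu>\<in>\<Omega> v. \<nu> \<in> Link L d (k - 1) \<mu>})"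
        by (rule sum.cong[OF refl]) (simp add: card_filter_sum finOm)
      also have "odd \<dots> \<longleftrightarrow> odd (\<Sum>v\<in>V. card {\<kappa>\<in>\<gamma>. v \<in> \<kappa> \<and> \<nu> \<subseteq> \<kappa>})"
        by (rule sum_par_cong) (use PV cn in auto)
      also have "(\<Sum>v\<in>V. card {\<kappa>\<in>\<gamma>. v \<in> \<kappa> \<and> \<nu> \<subseteq> \<kappa>}) = card {\<kappa>\<in>\<gamma>. \<nu> \<subseteq> \<kappa>}"
      proof -
        define G where "G = {\<kappa>\<in>\<gamma>. \<nu> \<subseteq> \<kappa>}"
        have fG: "finite G" using finG by (simp add: G_def)
        have "(\<Sum>v\<in>V. card {\<kappa>\<in>\<gamma>. v \<in> \<kappa> \<and> \<nu> \<subseteq> \<kappa>}) = (\<Sum>v\<in>V. \<Sum>\<kappa>\<in>G. if v \<in> \<kappa> then 1 else 0)"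
        proof (rule sum.cong[OF refl])
          fix v
          have "{\<kappa>\<in>\<gamma>. v \<in> \<kappa> \<and> \<nu> \<subseteq> \<kappa>} = {\<kappa>\<in>G. v \<in> \<kappa>}" by (auto simp: G_def)
          then show "card {\<kappa>\<in>\<gamma>. v \<in> \<kappa> \<and> \<nu> \<subseteq> \<kappa>} = (\<Sum>\<kappa>\<in>G. if v \<in> \<kappa> then 1 else 0)"
            using fG by (simp add: card_filter_sum)
        qed
        also have "\<dots> = (\<Sum>\<kappa>\<in>G. \<Sum>v\<in>V. if v \<in> \<kappa> then 1 else 0)" by (rule sum.swap)
        also have "\<dots> = (\<Sum>\<kappa>\<in>G. 1)"
        proof (rule sum.cong[OF refl])
          fix \<kappa> assume "\<kappa> \<in> G"
          then have "\<kappa> \<in> \<gamma>" by (simp add: G_def)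
          then show "(\<Sum>v\<in>V. if v \<in> \<kappa> then 1 else 0) = (1::nat)"
            using vone(2) finV by (simp add: card_filter_sum)
        qed
        finally show ?thesis by (simp add: G_def)
      qed
      finally have "odd (card {\<kappa>\<in>\<gamma>. \<nu> \<subseteq> \<kappa>})" using o e1 by simp
      moreover have "{\<kappa>\<in>\<gamma>. \<nu> \<in> faces \<kappa> (k - 1)} = {\<kappa>\<in>\<gamma>. \<nu> \<subseteq> \<kappa>}" using cn k by (auto simp: faces_def)
      ultimately have "\<nu> \<in> bd L k \<gamma>" using bdk by simp
      then show False using cycle(2) by simp
    qed
    then show ?thesis by blast
  qed
  have part2: "\<nexists>\<beta>. \<beta> \<subseteq> simplices L (d - k - 1) \<and> lam = gbd L (d - k - 1) d \<beta>"
    if nb: "\<nexists>\<beta>. \<beta> \<subseteq> simplices L (Suc k) \<and> \<gamma> = bd L (Suc k) \<beta>"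
  proof
    assume "\<exists>\<beta>. \<beta> \<subseteq> simplices L (d - k - 1) \<and> lam = gbd L (d - k - 1) d \<beta>"
    then obtain \<beta> where bs: "\<beta> \<subseteq> simplices L (d - k - 1)" and lb: "lam = gbd L (d - k - 1) d \<beta>" by blast
    have lamB: "lam = csum \<beta> (Star L d)"
    proof -
      have "\<not> d < d - k - 1" by simp
      then show ?thesis using lb by (simp add: gbd_def)
    qed
    have finB: "finite \<beta>" using bs finS finite_subset by blast
    have finSt: "finite (Star L n \<mu>)" for n \<mu> using finS[of n] by (simp add: Star_def)
    have bf: "card b = d - k" "b \<in> L" "finite b" "b \<noteq> {}" if bb: "b \<in> \<beta>" for b
    proof -
      have bs': "b \<in> simplices L (d - k - 1)" using bb bs by blast
      show "card b = d - k" using simpD(1)[OF bs'] k by simp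
      show "b \<in> L" "finite b" using simpD[OF bs'] by auto
      show "b \<noteq> {}" using simpD(1)[OF bs'] by auto
    qed
    define T where "T b = {\<tau>\<in>simplices L k. \<tau> \<inter> b = {} \<and> b \<union> \<tau> \<in> simplices L d \<and> col ` \<tau> = S}" for b
    have finT: "finite (T b)" for b using finS[of k] by (simp add: T_def)
    have injk: "inj_on col \<kappa>" if "card \<kappa> = Suc k" "finite \<kappa>" "col ` \<kappa> = S" for \<kappa>
      using that cS by (simp add: inj_on_iff_eq_card)
    have keyA: "\<kappa> \<in> \<gamma> \<longleftrightarrow> odd (card {\<sigma>\<in>lam. \<kappa> \<subseteq> \<sigma>})"
      if ck: "card \<kappa> = Suc k" and fk: "finite \<kappa>" and colk: "col ` \<kappa> = S" for \<kappa>
    proof -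
      have ik: "inj_on col \<kappa>" using injk[OF ck fk colk] .
      have "c_star \<in> col ` \<kappa>" using colk by (simp add: S_def)
      then obtain w where w: "w \<in> \<kappa>" "col w = c_star" by blast
      have cw: "card (\<kappa> - {w}) = k" "finite (\<kappa> - {w})" using ck fk w by auto
      have "odd (card {\<sigma>\<in>lam. \<kappa> \<subseteq> \<sigma>}) \<longleftrightarrow> odd (\<Sum>p\<in>P. card {\<sigma>\<in>(case p of (v, \<mu>) \<Rightarrow> Star L d \<mu>). \<kappa> \<subseteq> \<sigma>})"
        unfolding lamP by (rule csum_count[OF finP]) (auto simp: finSt)
      also have "(\<Sum>p\<in>P. card {\<sigma>\<in>(case p of (v, \<mu>) \<Rightarrow> Star L d \<mu>). \<kappa> \<subseteq> \<sigma>}) = (\<Sum>p\<in>P. N (snd p \<union> \<kappa>))"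
        by (rule sum.cong) (auto simp: N_def Star_def)
      also have "odd (\<Sum>p\<in>P. N (snd p \<union> \<kappa>)) \<longleftrightarrow>
          odd (\<Sum>p\<in>P. if fst p \<in> \<kappa> \<and> \<kappa> - {fst p} \<in> Link L d (k - 1) (snd p) then 1 else 0::nat)"
      proof (rule sum_par_cong)
        fix p assume "p \<in> P"
        then obtain v \<mu> where p: "p = (v, \<mu>)" "(v, \<mu>) \<in> P" by (cases p) auto
        note pf = Pf[OF p(2)]
        have "odd (N (\<mu> \<union> \<kappa>)) \<longleftrightarrow> v \<in> \<kappa> \<and> \<kappa> - {v} \<in> Link L d (k - 1) \<mu>"
        proof (cases "\<mu> \<inter> \<kappa> = {}")
          case True
          have "card (\<mu> \<union> \<kappa>) = Suc (d - k) + Suc k" using card_Un_disjoint[OF pf(7) fk True] pf(6) ck by simp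
          then have "N (\<mu> \<union> \<kappa>) = 0" using Nzero pf(7) fk k by simp
          moreover have "v \<notin> \<kappa>" using True pf(2) by blast
          ultimately show ?thesis by simp
        next
          case False
          then obtain x where x: "x \<in> \<mu>" "x \<in> \<kappa>" by blast
          have "col x \<in> {..<Suc d} - C" using pf(4) x(1) by blast
          moreover have "col x \<in> S" using colk x(2) by blast
          ultimately have "col x = c_star" by (auto simp: S_def)
          then have "x = v" using pf(5) pf(2,3) x(1) by (metis inj_onD)
          then have vk: "v \<in> \<kappa>" using x by simp
          have "\<mu> \<union> \<kappa> = \<mu> \<union> (\<kappa> - {v})" using pf(2) by blast
          moreover have "card (\<kappa> - {v}) = k" "finite (\<kappa> - {v})" using ck fk vk by auto
          ultimately show ?thesis using LinkC[OF pf(1)] vk by simp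
        qed
        then show "odd (N (snd p \<union> \<kappa>)) = odd (if fst p \<in> \<kappa> \<and> \<kappa> - {fst p} \<in> Link L d (k - 1) (snd p) then 1 else 0::nat)"
          using p(1) by simp
      qed
      also have "(\<Sum>p\<in>P. if fst p \<in> \<kappa> \<and> \<kappa> - {fst p} \<in> Link L d (k - 1) (snd p) then 1 else 0::nat)
          = (\<Sum>v\<in>V. \<Sum>\<mu>\<in>\<Omega> v. if v \<in> \<kappa> \<and> \<kappa> - {v} \<in> Link L d (k - 1) \<mu> then 1 else 0::nat)"
        unfolding P_def by (subst sum.Sigma) (use finV finOm in \<open>auto simp: case_prod_beta\<close>)
      also have "\<dots> = (\<Sum>v\<in>V. if v = w then card {\<mu>\<in>\<Omega> v. \<kappa> - {w} \<in> Link L d (k - 1) \<mu>} else 0)"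
      proof (rule sum.cong[OF refl])
        fix v assume vV: "v \<in> V"
        show "(\<Sum>\<mu>\<in>\<Omega> v. if v \<in> \<kappa> \<and> \<kappa> - {v} \<in> Link L d (k - 1) \<mu> then 1 else 0::nat) =
            (if v = w then card {\<mu>\<in>\<Omega> v. \<kappa> - {w} \<in> Link L d (k - 1) \<mu>} else 0)"
        proof (cases "v \<in> \<kappa>")
          case True
          have "col v = c_star" using vV by (simp add: V_def colored_vertices_def)
          then have "v = w" using ik True w by (metis inj_onD)
          then show ?thesis using True finOm[OF vV] by (simp add: card_filter_sum)
        next
          case False
          then have "v \<noteq> w" using w by blast
          then show ?thesis using False by simp
        qed
      qed
      also have "\<dots> = (if w \<in> V then card {\<mu>\<in>\<Omega> w. \<kappa> - {w} \<in> Link L d (k - 1) \<mu>} else 0)"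
        by (simp add: sum.delta finV)
      finally have chain: "odd (card {\<sigma>\<in>lam. \<kappa> \<subseteq> \<sigma>}) \<longleftrightarrow>
          odd (if w \<in> V then card {\<mu>\<in>\<Omega> w. \<kappa> - {w} \<in> Link L d (k - 1) \<mu>} else 0)" .
      show ?thesis
      proof (cases "w \<in> V")
        case True
        have "odd (card {\<mu>\<in>\<Omega> w. \<kappa> - {w} \<in> Link L d (k - 1) \<mu>}) \<longleftrightarrow> odd (card {\<kappa>'\<in>\<gamma>. w \<in> \<kappa>' \<and> \<kappa> - {w} \<subseteq> \<kappa>'})"
          using PV[OF True cw(1)] .
        moreover have "{\<kappa>'\<in>\<gamma>. w \<in> \<kappa>' \<and> \<kappa> - {w} \<subseteq> \<kappa>'} = (if \<kappa> \<in> \<gamma> then {\<kappa>} else {})"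
        proof -
          have "\<kappa>' = \<kappa>" if "\<kappa>' \<in> \<gamma>" "w \<in> \<kappa>'" "\<kappa> - {w} \<subseteq> \<kappa>'" for \<kappa>'
          proof -
            have "\<kappa> \<subseteq> \<kappa>'" using that w by blast
            then show ?thesis using gam(1,3)[OF that(1)] ck by (metis card_subset_eq)
          qed
          then show ?thesis using w by auto
        qed
        ultimately show ?thesis using chain True by simp
      next
        case False
        have "\<kappa> \<notin> \<gamma>" using False w by (auto simp: V_def colored_vertices_def)
        then show ?thesis using chain False by simp
      qed
    qed
    have keyB: "odd (card {\<sigma>\<in>lam. \<kappa> \<subseteq> \<sigma>}) \<longleftrightarrow> odd (\<Sum>b\<in>\<beta>. N (b \<union> \<kappa>))" for \<kappa>
    proof -
      have "odd (card {\<sigma>\<in>lam. \<kappa> \<subseteq> \<sigma>}) \<longleftrightarrow> odd (\<Sum>b\<in>\<beta>. card {\<sigma>\<in>Star L d b. \<kappa> \<subseteq> \<sigma>})"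
        unfolding lamB by (rule csum_count[OF finB]) (auto simp: finSt)
      also have "(\<Sum>b\<in>\<beta>. card {\<sigma>\<in>Star L d b. \<kappa> \<subseteq> \<sigma>}) = (\<Sum>b\<in>\<beta>. N (b \<union> \<kappa>))"
        by (rule sum.cong) (auto simp: N_def Star_def)
      finally show ?thesis .
    qed
    have keyC: "odd (N (b \<union> \<kappa>)) \<longleftrightarrow> \<kappa> \<in> T b"
      if bb: "b \<in> \<beta>" and ck: "card \<kappa> = Suc k" and fk: "finite \<kappa>" and colk: "col ` \<kappa> = S" for b \<kappa>
    proof (cases "b \<inter> \<kappa> = {}")
      case False
      then have "card (b \<inter> \<kappa>) \<ge> 1" using bf(3)[OF bb] by (simp add: Suc_le_eq card_gt_0_iff)
      moreover have "card (b \<union> \<kappa>) + card (b \<inter> \<kappa>) = card b + card \<kappa>"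
        using card_Un_Int[OF bf(3)[OF bb] fk] by simp
      ultimately have "card (b \<union> \<kappa>) \<le> d" using bf(1)[OF bb] ck k by linarith
      then have "even (N (b \<union> \<kappa>))" using Nev bf(3)[OF bb] fk by simp
      moreover have "\<kappa> \<notin> T b" using False by (auto simp: T_def)
      ultimately show ?thesis by simp
    next
      case True
      have cu: "card (b \<union> \<kappa>) = Suc d" using card_Un_disjoint[OF bf(3)[OF bb] fk True] bf(1)[OF bb] ck k by simp
      have "\<kappa> \<in> T b \<longleftrightarrow> b \<union> \<kappa> \<in> simplices L d"
      proof
        assume "\<kappa> \<in> T b" then show "b \<union> \<kappa> \<in> simplices L d" by (simp add: T_def)
      next
        assume a: "b \<union> \<kappa> \<in> simplices L d"
        have "\<kappa> \<noteq> {}" using ck by auto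
        then have "\<kappa> \<in> L" using sc_face[OF sc simpD(2)[OF a]] by blast
        then have "\<kappa> \<in> simplices L k" using ck by (simp add: simplices_def)
        then show "\<kappa> \<in> T b" using a True colk by (auto simp: T_def)
      qed
      then show ?thesis using Nbig[of "b \<union> \<kappa>"] cu bf(3)[OF bb] fk by simp
    qed
    have keyD: "even (card {\<tau>\<in>T b. \<rho> \<subseteq> \<tau>})" if bb: "b \<in> \<beta>" and fr: "finite \<rho>" and cr: "card \<rho> = k" for b \<rho>
    proof (cases "{\<tau>\<in>T b. \<rho> \<subseteq> \<tau>} = {}")
      case True then show ?thesis by (simp only: card.empty even_zero)
    next
      case False
      then obtain \<tau>0 where t0: "\<tau>0 \<in> T b" "\<rho> \<subseteq> \<tau>0" by blast
      have t0d: "\<tau>0 \<inter> b = {}" "b \<union> \<tau>0 \<in> simplices L d" "col ` \<tau>0 = S" using t0(1) by (auto simp: T_def)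
      have rb: "\<rho> \<inter> b = {}" using t0(2) t0d(1) by blast
      have colb: "col ` b = {..<Suc d} - S"
      proof -
        have all: "col ` (b \<union> \<tau>0) = {..<Suc d}" using top_col[OF sc col t0d(2)] .
        have inj0: "inj_on col (b \<union> \<tau>0)" using simplex_inj[OF sc col simpD(2)[OF t0d(2)]] .
        have "col ` b \<inter> col ` \<tau>0 = {}"
          using inj0 t0d(1) by (auto simp: inj_on_def)
        then show ?thesis using all t0d(3) by auto
      qed
      have fb: "finite b" using bf(3)[OF bb] .
      have img: "(\<lambda>\<tau>. b \<union> \<tau>) ` {\<tau>\<in>T b. \<rho> \<subseteq> \<tau>} = {\<sigma>\<in>simplices L d. b \<union> \<rho> \<subseteq> \<sigma>}"
      proof (intro equalityI subsetI)
        fix \<sigma> assume "\<sigma> \<in> (\<lambda>\<tau>. b \<union> \<tau>) ` {\<tau>\<in>T b. \<rho> \<subseteq> \<tau>}"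
        then show "\<sigma> \<in> {\<sigma>\<in>simplices L d. b \<union> \<rho> \<subseteq> \<sigma>}" by (auto simp: T_def)
      next
        fix \<sigma> assume "\<sigma> \<in> {\<sigma>\<in>simplices L d. b \<union> \<rho> \<subseteq> \<sigma>}"
        then have sd: "\<sigma> \<in> simplices L d" and br: "b \<union> \<rho> \<subseteq> \<sigma>" by auto
        define \<tau> where "\<tau> = \<sigma> - b"
        have bt: "b \<union> \<tau> = \<sigma>" using br by (auto simp: \<tau>_def)
        have tb: "\<tau> \<inter> b = {}" by (auto simp: \<tau>_def)
        have rt: "\<rho> \<subseteq> \<tau>" using br rb by (auto simp: \<tau>_def)
        have fs: "finite \<sigma>" "card \<sigma> = Suc d" using simpD[OF sd] by auto
        have ct: "card \<tau> = Suc k"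
        proof -
          have "card \<tau> = card \<sigma> - card b" unfolding \<tau>_def using br fb by (simp add: card_Diff_subset)
          then show ?thesis using fs bf(1)[OF bb] k by simp
        qed
        have "\<tau> \<noteq> {}" using ct by auto
        then have "\<tau> \<in> L" using sc_face[OF sc simpD(2)[OF sd]] bt by blast
        then have ts: "\<tau> \<in> simplices L k" using ct by (simp add: simplices_def)
        have "col ` \<tau> = S"
        proof -
          have all: "col ` \<sigma> = {..<Suc d}" using top_col[OF sc col sd] .
          have inj1: "inj_on col \<sigma>" using simplex_inj[OF sc col simpD(2)[OF sd]] .
          have "col ` b \<inter> col ` \<tau> = {}" using inj1 tb bt by (auto simp: inj_on_def)
          moreover have "col ` b \<union> col ` \<tau> = {..<Suc d}" using all bt by auto
          ultimately show ?thesis using colb Ssub by auto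
        qed
        then have "\<tau> \<in> T b" using ts tb bt sd by (simp add: T_def)
        then show "\<sigma> \<in> (\<lambda>\<tau>. b \<union> \<tau>) ` {\<tau>\<in>T b. \<rho> \<subseteq> \<tau>}" using rt bt by blast
      qed
      have inj: "inj_on (\<lambda>\<tau>. b \<union> \<tau>) {\<tau>\<in>T b. \<rho> \<subseteq> \<tau>}"
      proof
        fix x y assume "x \<in> {\<tau>\<in>T b. \<rho> \<subseteq> \<tau>}" "y \<in> {\<tau>\<in>T b. \<rho> \<subseteq> \<tau>}" "b \<union> x = b \<union> y"
        then show "x = y" by (auto simp: T_def)
      qed
      have "card {\<tau>\<in>T b. \<rho> \<subseteq> \<tau>} = N (b \<union> \<rho>)"
        using card_image[OF inj] img by (simp add: N_def)
      moreover have "card (b \<union> \<rho>) = d"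
        using card_Un_disjoint[OF fb fr] rb bf(1)[OF bb] cr k by (simp add: Int_commute)
      ultimately show ?thesis using Nev fb fr by simp
    qed
    define u where "u b = (SOME x. x \<in> b)" for b :: "'v set"
    have ub: "u b \<in> b" if "b \<in> \<beta>" for b
      using bf(4)[OF that] unfolding u_def by (meson ex_in_conv someI_ex)
    define A where "A b = insert (u b) ` T b" for b
    define \<alpha> where "\<alpha> = csum \<beta> A"
    have finA: "finite (A b)" for b using finT by (simp add: A_def)
    have Tb: "\<tau> \<in> simplices L k" "\<tau> \<inter> b = {}" "b \<union> \<tau> \<in> simplices L d" "col ` \<tau> = S" if "\<tau> \<in> T b" for \<tau> b
      using that by (auto simp: T_def)
    have keyE: "odd (card {a\<in>A b. \<kappa> \<subseteq> a}) \<longleftrightarrow> \<kappa> \<in> T b"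
      if bb: "b \<in> \<beta>" and ck: "card \<kappa> = Suc k" and fk: "finite \<kappa>" for b \<kappa>
    proof (cases "u b \<in> \<kappa>")
      case True
      have injI: "inj_on (insert (u b)) {\<tau>\<in>T b. \<kappa> - {u b} \<subseteq> \<tau>}"
      proof
        fix x y assume x: "x \<in> {\<tau>\<in>T b. \<kappa> - {u b} \<subseteq> \<tau>}" and y: "y \<in> {\<tau>\<in>T b. \<kappa> - {u b} \<subseteq> \<tau>}"
          and e: "insert (u b) x = insert (u b) y"
        have "u b \<notin> x" "u b \<notin> y" using x y Tb(2) ub[OF bb] by blast+
        then show "x = y" using e by (metis insert_ident)
      qed
      have "{a\<in>A b. \<kappa> \<subseteq> a} = insert (u b) ` {\<tau>\<in>T b. \<kappa> - {u b} \<subseteq> \<tau>}"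
        using True by (auto simp: A_def)
      then have "card {a\<in>A b. \<kappa> \<subseteq> a} = card {\<tau>\<in>T b. \<kappa> - {u b} \<subseteq> \<tau>}"
        using card_image[OF injI] by simp
      moreover have "even (card {\<tau>\<in>T b. \<kappa> - {u b} \<subseteq> \<tau>})"
        using keyD[OF bb, of "\<kappa> - {u b}"] ck fk True by simp
      moreover have "\<kappa> \<notin> T b" using True ub[OF bb] Tb(2) by blast
      ultimately show ?thesis by simp
    next
      case False
      have "{a\<in>A b. \<kappa> \<subseteq> a} = (if \<kappa> \<in> T b then {insert (u b) \<kappa>} else {})"
      proof -
        have "\<tau> = \<kappa>" if "\<tau> \<in> T b" "\<kappa> \<subseteq> insert (u b) \<tau>" for \<tau>
        proof -
          have "\<kappa> \<subseteq> \<tau>" using that(2) False by blast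
          then show ?thesis using simpD[OF Tb(1)[OF that(1)]] ck by (metis card_subset_eq)
        qed
        then show ?thesis by (auto simp: A_def)
      qed
      then show ?thesis by simp
    qed
    have \<alpha>sub: "\<alpha> \<subseteq> simplices L (Suc k)"
    proof
      fix a assume "a \<in> \<alpha>"
      then have "odd (card {b\<in>\<beta>. a \<in> A b})" by (simp add: \<alpha>_def csum_def)
      then have "{b\<in>\<beta>. a \<in> A b} \<noteq> {}" by (metis card.empty even_zero)
      then obtain b \<tau> where bb: "b \<in> \<beta>" and t: "\<tau> \<in> T b" and a: "a = insert (u b) \<tau>" by (auto simp: A_def)
      have un: "u b \<notin> \<tau>" using Tb(2)[OF t] ub[OF bb] by blast
      have "a \<subseteq> b \<union> \<tau>" using a ub[OF bb] by auto
      then have "a \<in> L" using sc_face[OF sc simpD(2)[OF Tb(3)[OF t]]] a by blast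
      moreover have "card a = Suc (Suc k)" using a un simpD[OF Tb(1)[OF t]] by simp
      ultimately show "a \<in> simplices L (Suc k)" by (simp add: simplices_def)
    qed
    have \<alpha>bd: "\<gamma> = bd L (Suc k) \<alpha>"
    proof (rule set_eqI)
      fix \<kappa>
      have bdE: "\<kappa> \<in> bd L (Suc k) \<alpha> \<longleftrightarrow> odd (card {a\<in>\<alpha>. \<kappa> \<in> faces a k})"
        by (simp add: bd_def gbd_def csum_def)
      show "\<kappa> \<in> \<gamma> \<longleftrightarrow> \<kappa> \<in> bd L (Suc k) \<alpha>"
      proof (cases "card \<kappa> = Suc k")
        case False
        then have "{a\<in>\<alpha>. \<kappa> \<in> faces a k} = {}" by (auto simp: faces_def)
        then have "\<kappa> \<notin> bd L (Suc k) \<alpha>" using bdE by (metis card.empty even_zero)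
        moreover have "\<kappa> \<notin> \<gamma>" using False gam(1) by blast
        ultimately show ?thesis by blast
      next
        case True
        have fk: "finite \<kappa>" using True by (metis card.infinite nat.distinct(1))
        have "{a\<in>\<alpha>. \<kappa> \<in> faces a k} = {a\<in>\<alpha>. \<kappa> \<subseteq> a}" using True by (auto simp: faces_def)
        then have "\<kappa> \<in> bd L (Suc k) \<alpha> \<longleftrightarrow> odd (card {a\<in>\<alpha>. \<kappa> \<subseteq> a})" using bdE by simp
        also have "\<dots> \<longleftrightarrow> odd (\<Sum>b\<in>\<beta>. card {a\<in>A b. \<kappa> \<subseteq> a})"
          unfolding \<alpha>_def by (rule csum_count[OF finB]) (auto simp: finA)
        also have "\<dots> \<longleftrightarrow> odd (\<Sum>b\<in>\<beta>. if \<kappa> \<in> T b then 1 else 0::nat)"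
          by (rule sum_par_cong) (use keyE True fk in simp)
        finally have R: "\<kappa> \<in> bd L (Suc k) \<alpha> \<longleftrightarrow> odd (\<Sum>b\<in>\<beta>. if \<kappa> \<in> T b then 1 else 0::nat)" .
        show ?thesis
        proof (cases "col ` \<kappa> = S")
          case True2: True
          have "\<kappa> \<in> \<gamma> \<longleftrightarrow> odd (\<Sum>b\<in>\<beta>. N (b \<union> \<kappa>))" using keyA[OF True fk True2] keyB by simp
          also have "\<dots> \<longleftrightarrow> odd (\<Sum>b\<in>\<beta>. if \<kappa> \<in> T b then 1 else 0::nat)"
            by (rule sum_par_cong) (use keyC True fk True2 in simp)
          finally show ?thesis using R by simp
        next
          case False2: False
          have "\<kappa> \<notin> \<gamma>" using False2 gam(4) by blast
          moreover have "(\<Sum>b\<in>\<beta>. if \<kappa> \<in> T b then 1 else 0::nat) = 0"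
            using False2 by (auto simp: T_def)
          ultimately show ?thesis using R by simp
        qed
      qed
    qed
    show False using nb \<alpha>sub \<alpha>bd by blast
  qed
  show ?thesis using part1a part1b part2 by blast
qed


end
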